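(* The functions $\mu\mapsto\Pi(D^\mu,C^\mu)$ and $\mu\mapsto G(D^\mu,C^\mu)$ are non-increasing on $[0,\infty)$.
   Context: Let $(X,Y)\sim P_{XY}$ on $\mathcal X\times\mathcal Y$, $\alpha\in(0,1)$. $\mathcal I$ is a finite collection of subsets of $\mathcal Y$ enumerated in a fixed lexicographic order, $w:\mathcal I\to(0,B)$ a bounded positive weight. For $C\in\mathcal I$ let $p_C(x)=\mathbb P(Y\in C\mid X=x)$, $\ell_{x,C}(\mu)=w(C)p_C(x)+\mu(p_C(x)-(1-\alpha))$ for $\mu\ge0$, $\mathcal U_x(\mu)=\max_{C\in\mathcal I}\ell_{x,C}(\mu)$. $C^\mu(x)$ is a maximizer of $\ell_{x,C}(\mu)$ over $C\in\mathcal I$, ties broken in favor of the largest $w(C)$ and then smallest index; $D^\mu(x)=\mathbb 1\{\mathcal U_x(\mu)\ge0\}$. For $D:\mathcal X\to\{0,1\}$, $C:\mathcal X\to\mathcal I$: $\Pi(D,C)=\mathbb E[w(C(X))p_{C(X)}(X)D(X)]$, $G(D,C)=\mathbb E[(1-p_{C(X)}(X)-\alpha)D(X)]$. *)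

theory Defs
  imports "HOL-Probability.Probability"
begin

definition cond_prob_version ::
  "'w measure \<Rightarrow> 'x measure \<Rightarrow> ('w \<Rightarrow> 'x) \<Rightarrow> ('w \<Rightarrow> 'y) \<Rightarrow> 'y set \<Rightarrow> ('x \<Rightarrow> real) \<Rightarrow> bool"
where
  "cond_prob_version M MX X Y C q \<longleftrightarrow>
     q \<in> borel_measurable MX \<and>
     integrable M (\<lambda>\<omega>. q (X \<omega>)) \<and>
     (\<forall>A\<in>sets MX. (\<integral>\<omega>. indicator A (X \<omega>) * q (X \<omega>) \<partial>M)
                    = measure M {\<omega>\<in>space M. X \<omega> \<in> A \<and> Y \<omega> \<in> C})"

definition ell :: "('y set \<Rightarrow> 'x \<Rightarrow> real) \<Rightarrow> ('y set \<Rightarrow> real) \<Rightarrow> real \<Rightarrow> 'x \<Rightarrow> 'y set \<Rightarrow> real \<Rightarrow> real"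
where "ell p w \<alpha> x C \<mu> = w C * p C x + \<mu> * (p C x - (1 - \<alpha>))"

definition Uval :: "'y set list \<Rightarrow> ('y set \<Rightarrow> 'x \<Rightarrow> real) \<Rightarrow> ('y set \<Rightarrow> real) \<Rightarrow> real \<Rightarrow> real \<Rightarrow> 'x \<Rightarrow> real"
where "Uval Is p w \<alpha> \<mu> x = Max ((\<lambda>C. ell p w \<alpha> x C \<mu>) ` set Is)"

text \<open>Index of the chosen maximizer: among maximizers, largest weight, then smallest index.\<close>
definition Cidx :: "'y set list \<Rightarrow> ('y set \<Rightarrow> 'x \<Rightarrow> real) \<Rightarrow> ('y set \<Rightarrow> real) \<Rightarrow> real \<Rightarrow> real \<Rightarrow> 'x \<Rightarrow> nat"
where "Cidx Is p w \<alpha> \<mu> x =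
  (LEAST i. i < length Is \<and> ell p w \<alpha> x (Is ! i) \<mu> = Uval Is p w \<alpha> \<mu> x \<and>
     (\<forall>j<length Is. ell p w \<alpha> x (Is ! j) \<mu> = Uval Is p w \<alpha> \<mu> x \<longrightarrow> w (Is ! j) \<le> w (Is ! i)))"

definition Cmu :: "'y set list \<Rightarrow> ('y set \<Rightarrow> 'x \<Rightarrow> real) \<Rightarrow> ('y set \<Rightarrow> real) \<Rightarrow> real \<Rightarrow> real \<Rightarrow> 'x \<Rightarrow> 'y set"
where "Cmu Is p w \<alpha> \<mu> x = Is ! Cidx Is p w \<alpha> \<mu> x"

definition Dmu :: "'y set list \<Rightarrow> ('y set \<Rightarrow> 'x \<Rightarrow> real) \<Rightarrow> ('y set \<Rightarrow> real) \<Rightarrow> real \<Rightarrow> real \<Rightarrow> 'x \<Rightarrow> real"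
where "Dmu Is p w \<alpha> \<mu> x = (if Uval Is p w \<alpha> \<mu> x \<ge> 0 then 1 else 0)"

definition PiVal :: "'w measure \<Rightarrow> ('w \<Rightarrow> 'x) \<Rightarrow> ('y set \<Rightarrow> 'x \<Rightarrow> real) \<Rightarrow> ('y set \<Rightarrow> real)
   \<Rightarrow> ('x \<Rightarrow> real) \<Rightarrow> ('x \<Rightarrow> 'y set) \<Rightarrow> real"
where "PiVal M X p w D C = (\<integral>\<omega>. w (C (X \<omega>)) * p (C (X \<omega>)) (X \<omega>) * D (X \<omega>) \<partial>M)"

definition GVal :: "'w measure \<Rightarrow> ('w \<Rightarrow> 'x) \<Rightarrow> ('y set \<Rightarrow> 'x \<Rightarrow> real) \<Rightarrow> real
   \<Rightarrow> ('x \<Rightarrow> real) \<Rightarrow> ('x \<Rightarrow> 'y set) \<Rightarrow> real"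
where "GVal M X p \<alpha> D C = (\<integral>\<omega>. (1 - p (C (X \<omega>)) (X \<omega>) - \<alpha>) * D (X \<omega>) \<partial>M)"

end

theory Submission
  imports Defs
begin

lemma Uval_ge:
  "C \<in> set Is \<Longrightarrow> ell p w \<alpha> x C \<mu> \<le> Uval Is p w \<alpha> \<mu> x"
  unfolding Uval_def by (intro Max_ge) auto

lemma Cidx_props:
  assumes "Is \<noteq> []"
  shows "Cidx Is p w \<alpha> \<mu> x < length Is \<and>
         ell p w \<alpha> x (Cmu Is p w \<alpha> \<mu> x) \<mu> = Uval Is p w \<alpha> \<mu> x"
proof -
  let ?U = "Uval Is p w \<alpha> \<mu> x"
  define S where "S = {i. i < length Is \<and> ell p w \<alpha> x (Is ! i) \<mu> = ?U}"
  have "?U \<in> (\<lambda>C. ell p w \<alpha> x C \<mu>) ` set Is"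
    unfolding Uval_def using assms by (intro Max_in) auto
  then obtain C where "C \<in> set Is" "ell p w \<alpha> x C \<mu> = ?U" by auto
  then obtain i0 where "i0 < length Is" "Is ! i0 = C" by (metis in_set_conv_nth)
  hence "i0 \<in> S" using \<open>ell p w \<alpha> x C \<mu> = ?U\<close> by (auto simp: S_def)
  have fin: "finite S" unfolding S_def by auto
  have "Max ((\<lambda>i. w (Is ! i)) ` S) \<in> (\<lambda>i. w (Is ! i)) ` S"
    using fin \<open>i0 \<in> S\<close> by (intro Max_in) auto
  then obtain i where i: "i \<in> S" "w (Is ! i) = Max ((\<lambda>i. w (Is ! i)) ` S)" by auto
  have "\<forall>j\<in>S. w (Is ! j) \<le> w (Is ! i)" using i fin by (auto intro!: Max_ge)
  hence P: "i < length Is \<and> ell p w \<alpha> x (Is ! i) \<mu> = ?U \<and>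
     (\<forall>j<length Is. ell p w \<alpha> x (Is ! j) \<mu> = ?U \<longrightarrow> w (Is ! j) \<le> w (Is ! i))"
    using i by (auto simp: S_def)
  define Pr where "Pr = (\<lambda>i. i < length Is \<and> ell p w \<alpha> x (Is ! i) \<mu> = ?U \<and>
     (\<forall>j<length Is. ell p w \<alpha> x (Is ! j) \<mu> = ?U \<longrightarrow> w (Is ! j) \<le> w (Is ! i)))"
  have "Pr i" using P by (simp add: Pr_def)
  hence "Pr (Least Pr)" by (rule LeastI)
  moreover have "Cidx Is p w \<alpha> \<mu> x = Least Pr" by (simp add: Cidx_def Pr_def)
  ultimately show ?thesis by (simp add: Pr_def Cmu_def)
qed

lemma Cmu_in: "Is \<noteq> [] \<Longrightarrow> Cmu Is p w \<alpha> \<mu> x \<in> set Is"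
  using Cidx_props[of Is p w \<alpha> \<mu> x] unfolding Cmu_def by (metis nth_mem)

lemma pointwise:
  assumes ne: "Is \<noteq> []" and wpos: "\<And>C. C \<in> set Is \<Longrightarrow> 0 < w C" and "\<alpha> < 1"
    and m: "0 \<le> \<mu>1" "\<mu>1 \<le> \<mu>2"
  shows "w (Cmu Is p w \<alpha> \<mu>2 x) * p (Cmu Is p w \<alpha> \<mu>2 x) x * Dmu Is p w \<alpha> \<mu>2 x
          \<le> w (Cmu Is p w \<alpha> \<mu>1 x) * p (Cmu Is p w \<alpha> \<mu>1 x) x * Dmu Is p w \<alpha> \<mu>1 x
       \<and> (1 - p (Cmu Is p w \<alpha> \<mu>2 x) x - \<alpha>) * Dmu Is p w \<alpha> \<mu>2 x
          \<le> (1 - p (Cmu Is p w \<alpha> \<mu>1 x) x - \<alpha>) * Dmu Is p w \<alpha> \<mu>1 x"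
proof -
  define C1 where "C1 = Cmu Is p w \<alpha> \<mu>1 x"
  define C2 where "C2 = Cmu Is p w \<alpha> \<mu>2 x"
  define U1 where "U1 = Uval Is p w \<alpha> \<mu>1 x"
  define U2 where "U2 = Uval Is p w \<alpha> \<mu>2 x"
  define a1 where "a1 = w C1 * p C1 x"
  define a2 where "a2 = w C2 * p C2 x"
  define b1 where "b1 = p C1 x - (1 - \<alpha>)"
  define b2 where "b2 = p C2 x - (1 - \<alpha>)"
  have in1: "C1 \<in> set Is" and in2: "C2 \<in> set Is" using Cmu_in[OF ne] C1_def C2_def by auto
  have e1: "a1 + \<mu>1 * b1 = U1" using Cidx_props[OF ne, of p w \<alpha> \<mu>1 x]
    by (simp add: C1_def U1_def a1_def b1_def ell_def)
  have e2: "a2 + \<mu>2 * b2 = U2" using Cidx_props[OF ne, of p w \<alpha> \<mu>2 x]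
    by (simp add: C2_def U2_def a2_def b2_def ell_def)
  have g1: "a2 + \<mu>1 * b2 \<le> U1" using Uval_ge[OF in2, of p w \<alpha> x \<mu>1]
    by (simp add: U1_def a2_def b2_def ell_def)
  have g2: "a1 + \<mu>2 * b1 \<le> U2" using Uval_ge[OF in1, of p w \<alpha> x \<mu>2]
    by (simp add: U2_def a1_def b1_def ell_def)
  have w1: "0 < w C1" and w2: "0 < w C2" using wpos in1 in2 by auto
  have pos1: "b1 > 0 \<Longrightarrow> a1 > 0" using w1 \<open>\<alpha> < 1\<close> by (simp add: a1_def b1_def)
  have pos2: "b2 > 0 \<Longrightarrow> a2 > 0" using w2 \<open>\<alpha> < 1\<close> by (simp add: a2_def b2_def)
  have ab: "b1 \<le> b2 \<and> a2 \<le> a1"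
  proof (cases "\<mu>1 = \<mu>2")
    case True then show ?thesis by (simp add: C1_def C2_def a1_def a2_def b1_def b2_def)
  next
    case False
    hence lt: "\<mu>1 < \<mu>2" using m by auto
    have "(\<mu>2 - \<mu>1) * (b2 - b1) \<ge> 0" using e1 e2 g1 g2 by (simp add: algebra_simps)
    hence "b2 - b1 \<ge> 0" using lt by (simp add: zero_le_mult_iff)
    moreover have "a1 - a2 \<ge> \<mu>1 * (b2 - b1)" using e1 g1 by (simp add: algebra_simps)
    moreover have "\<mu>1 * (b2 - b1) \<ge> 0" using m calculation by simp
    ultimately show ?thesis by simp
  qed
  have D: "U2 \<ge> 0 \<Longrightarrow> U1 \<ge> 0"
  proof -
    assume "U2 \<ge> 0"
    show "U1 \<ge> 0"
    proof (cases "b2 \<le> 0")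
      case True
      hence "\<mu>2 * b2 \<le> \<mu>1 * b2" using m by (simp add: mult_right_mono_neg)
      then show ?thesis using e2 g1 \<open>U2 \<ge> 0\<close> by linarith
    next
      case False
      hence "a2 > 0" using pos2 by simp
      moreover have "\<mu>1 * b2 \<ge> 0" using False m by simp
      ultimately show ?thesis using g1 by linarith
    qed
  qed
  have D10: "U1 \<ge> 0 \<Longrightarrow> U2 < 0 \<Longrightarrow> b1 \<le> 0 \<and> a1 \<ge> 0"
  proof -
    assume h: "U1 \<ge> 0" "U2 < 0"
    have "b1 \<le> 0"
    proof (rule ccontr)
      assume "\<not> b1 \<le> 0"
      hence "a1 > 0" "\<mu>2 * b1 \<ge> 0" using pos1 m by auto
      thus False using g2 h by linarith
    qed
    moreover have "\<mu>1 * b1 \<le> 0" using calculation m by (simp add: mult_nonneg_nonpos)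
    ultimately show ?thesis using e1 h by linarith
  qed
  have Dd1: "Dmu Is p w \<alpha> \<mu>1 x = (if U1 \<ge> 0 then 1 else 0)" by (simp add: Dmu_def U1_def)
  have Dd2: "Dmu Is p w \<alpha> \<mu>2 x = (if U2 \<ge> 0 then 1 else 0)" by (simp add: Dmu_def U2_def)
  have "a2 * Dmu Is p w \<alpha> \<mu>2 x \<le> a1 * Dmu Is p w \<alpha> \<mu>1 x \<and>
        (- b2) * Dmu Is p w \<alpha> \<mu>2 x \<le> (- b1) * Dmu Is p w \<alpha> \<mu>1 x"
    unfolding Dd1 Dd2 using ab D D10 by auto
  thus ?thesis by (simp add: C1_def C2_def a1_def a2_def b1_def b2_def algebra_simps)
qed


lemma Cidx_meas:
  assumes ne: "Is \<noteq> []" and pm: "\<And>C. C \<in> set Is \<Longrightarrow> p C \<in> borel_measurable MX"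
  shows "Cidx Is p w \<alpha> \<mu> \<in> measurable MX (count_space UNIV)"
proof -
  have ellm: "(\<lambda>x. ell p w \<alpha> x C \<mu>) \<in> borel_measurable MX" if "C \<in> set Is" for C
    using pm[OF that] unfolding ell_def by measurable
  have Um[measurable]: "(\<lambda>x. Uval Is p w \<alpha> \<mu> x) \<in> borel_measurable MX"
    unfolding Uval_def by (rule borel_measurable_Max) (auto intro: ellm)
  have ellm'[measurable]: "(\<lambda>x. ell p w \<alpha> x (Is ! j) \<mu>) \<in> borel_measurable MX"
    if "j < length Is" for j using ellm that by auto
  have "(\<lambda>x. i < length Is \<and> ell p w \<alpha> x (Is ! i) \<mu> = Uval Is p w \<alpha> \<mu> x \<and>
     (\<forall>j<length Is. ell p w \<alpha> x (Is ! j) \<mu> = Uval Is p w \<alpha> \<mu> x \<longrightarrow> w (Is ! j) \<le> w (Is ! i)))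
     \<in> measurable MX (count_space UNIV)" for i
  proof (cases "i < length Is")
    case True
    have "Measurable.pred MX (\<lambda>x. \<forall>j\<in>{..<length Is}. ell p w \<alpha> x (Is ! j) \<mu> = Uval Is p w \<alpha> \<mu> x \<longrightarrow> w (Is ! j) \<le> w (Is ! i))"
    proof (rule pred_intros_finite(3))
      fix j assume "j \<in> {..<length Is}"
      hence [measurable]: "(\<lambda>x. ell p w \<alpha> x (Is ! j) \<mu>) \<in> borel_measurable MX" using ellm' by auto
      show "Measurable.pred MX (\<lambda>x. ell p w \<alpha> x (Is ! j) \<mu> = Uval Is p w \<alpha> \<mu> x \<longrightarrow> w (Is ! j) \<le> w (Is ! i))"
        by measurable
    qed simp
    then show ?thesis using True by (simp add: lessThan_iff[symmetric] del: lessThan_iff) measurable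
  next
    case False then show ?thesis by simp
  qed
  then show ?thesis unfolding Cidx_def[abs_def] by (rule measurable_Least)
qed

theorem corollary1:
  fixes M :: "'w measure" and MX :: "'x measure" and MY :: "'y measure"
    and X :: "'w \<Rightarrow> 'x" and Y :: "'w \<Rightarrow> 'y"
    and Is :: "'y set list" and w :: "'y set \<Rightarrow> real" and B :: real and \<alpha> :: real
    and p :: "'y set \<Rightarrow> 'x \<Rightarrow> real"
  assumes "prob_space M"
    and "X \<in> measurable M MX" and "Y \<in> measurable M MY"
    and "0 < \<alpha>" and "\<alpha> < 1"
    and "Is \<noteq> []" and "distinct Is" and "set Is \<subseteq> sets MY"
    and "\<And>C. C \<in> set Is \<Longrightarrow> 0 < w C \<and> w C < B"
    and "\<And>C. C \<in> set Is \<Longrightarrow> cond_prob_version M MX X Y C (p C)"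
  shows "(\<forall>\<mu>1 \<mu>2. 0 \<le> \<mu>1 \<longrightarrow> \<mu>1 \<le> \<mu>2 \<longrightarrow>
            PiVal M X p w (Dmu Is p w \<alpha> \<mu>2) (Cmu Is p w \<alpha> \<mu>2)
              \<le> PiVal M X p w (Dmu Is p w \<alpha> \<mu>1) (Cmu Is p w \<alpha> \<mu>1))
       \<and> (\<forall>\<mu>1 \<mu>2. 0 \<le> \<mu>1 \<longrightarrow> \<mu>1 \<le> \<mu>2 \<longrightarrow>
            GVal M X p \<alpha> (Dmu Is p w \<alpha> \<mu>2) (Cmu Is p w \<alpha> \<mu>2)
              \<le> GVal M X p \<alpha> (Dmu Is p w \<alpha> \<mu>1) (Cmu Is p w \<alpha> \<mu>1))"
proof -
  note ne = assms(6)
  have Xm[measurable]: "X \<in> measurable M MX" by fact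
  have pm: "p C \<in> borel_measurable MX" if "C \<in> set Is" for C
    using assms(10)[OF that] by (simp add: cond_prob_version_def)
  have pint: "integrable M (\<lambda>\<omega>. p C (X \<omega>))" if "C \<in> set Is" for C
    using assms(10)[OF that] by (simp add: cond_prob_version_def)
  have Cim[measurable]: "(\<lambda>\<omega>. Cidx Is p w \<alpha> \<mu> (X \<omega>)) \<in> measurable M (count_space UNIV)" for \<mu>
    using Cidx_meas[OF ne pm] by measurable
  have Um: "(\<lambda>x. Uval Is p w \<alpha> \<mu> x) \<in> borel_measurable MX" for \<mu>
  proof -
    have ellm: "(\<lambda>x. ell p w \<alpha> x C \<mu>) \<in> borel_measurable MX" if "C \<in> set Is" for C
      using pm[OF that] unfolding ell_def by measurable
    show ?thesis unfolding Uval_def by (rule borel_measurable_Max) (auto intro: ellm)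
  qed
  have Dm: "(\<lambda>\<omega>. Dmu Is p w \<alpha> \<mu> (X \<omega>)) \<in> borel_measurable M" for \<mu>
    unfolding Dmu_def using Um[of \<mu>] by measurable
  have pim: "(\<lambda>\<omega>. p (Is ! i) (X \<omega>)) \<in> borel_measurable M" if "i < length Is" for i
    using measurable_compose[OF Xm pm[of "Is ! i"]] that by auto
  have comp: "(\<lambda>\<omega>. f (Cmu Is p w \<alpha> \<mu> (X \<omega>)) (X \<omega>)) \<in> borel_measurable M"
    if f: "\<And>i. i < length Is \<Longrightarrow> (\<lambda>\<omega>. f (Is ! i) (X \<omega>)) \<in> borel_measurable M"
    for f :: "'y set \<Rightarrow> 'x \<Rightarrow> real" and \<mu>
  proof -
    define F where "F i \<omega> = (if i < length Is then f (Is ! i) (X \<omega>) else 0)" for i \<omega>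
    have "(\<lambda>\<omega>. F (Cidx Is p w \<alpha> \<mu> (X \<omega>)) \<omega>) \<in> borel_measurable M"
    proof (rule measurable_compose_countable'[OF _ Cim])
      fix i :: nat
      show "(\<lambda>\<omega>. F i \<omega>) \<in> borel_measurable M"
        by (cases "i < length Is") (simp_all add: F_def f)
    qed simp
    moreover have "F (Cidx Is p w \<alpha> \<mu> (X \<omega>)) \<omega> = f (Cmu Is p w \<alpha> \<mu> (X \<omega>)) (X \<omega>)" for \<omega>
      using Cidx_props[OF ne, of p w \<alpha> \<mu> "X \<omega>"] by (simp add: F_def Cmu_def)
    ultimately show ?thesis by simp
  qed
  have boundint: "integrable M (\<lambda>\<omega>. \<Sum>C\<in>set Is. \<bar>p C (X \<omega>)\<bar>)"
    using Bochner_Integration.integrable_sum[where I="set Is" and M=M and f="\<lambda>C \<omega>. \<bar>p C (X \<omega>)\<bar>"] by (auto intro!: integrable_abs pint)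
  define K where "K = (\<Sum>C\<in>set Is. \<bar>w C\<bar>)"
  have wle: "\<bar>w C\<bar> \<le> K" if "C \<in> set Is" for C
    unfolding K_def using that by (intro member_le_sum) auto
  have ple: "\<bar>p C y\<bar> \<le> (\<Sum>C\<in>set Is. \<bar>p C y\<bar>)" if "C \<in> set Is" for C y
    using that by (intro member_le_sum) auto
  have D01: "Dmu Is p w \<alpha> \<mu> x = 0 \<or> Dmu Is p w \<alpha> \<mu> x = 1" for \<mu> x by (simp add: Dmu_def)
  have intPi: "integrable M (\<lambda>\<omega>. w (Cmu Is p w \<alpha> \<mu> (X \<omega>)) * p (Cmu Is p w \<alpha> \<mu> (X \<omega>)) (X \<omega>)
      * Dmu Is p w \<alpha> \<mu> (X \<omega>))" for \<mu>
  proof (rule Bochner_Integration.integrable_bound[of _ "\<lambda>\<omega>. K * (\<Sum>C\<in>set Is. \<bar>p C (X \<omega>)\<bar>)"])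
    show "integrable M (\<lambda>\<omega>. K * (\<Sum>C\<in>set Is. \<bar>p C (X \<omega>)\<bar>))" using boundint by auto
    show "(\<lambda>\<omega>. w (Cmu Is p w \<alpha> \<mu> (X \<omega>)) * p (Cmu Is p w \<alpha> \<mu> (X \<omega>)) (X \<omega>)
      * Dmu Is p w \<alpha> \<mu> (X \<omega>)) \<in> borel_measurable M"
      by (intro borel_measurable_times Dm comp[where f="\<lambda>C x. w C * p C x"]) (auto intro!: pim)
    show "AE \<omega> in M. norm (w (Cmu Is p w \<alpha> \<mu> (X \<omega>)) * p (Cmu Is p w \<alpha> \<mu> (X \<omega>)) (X \<omega>)
      * Dmu Is p w \<alpha> \<mu> (X \<omega>)) \<le> norm (K * (\<Sum>C\<in>set Is. \<bar>p C (X \<omega>)\<bar>))"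
    proof (rule AE_I2)
      fix \<omega>
      let ?C = "Cmu Is p w \<alpha> \<mu> (X \<omega>)"
      have c: "?C \<in> set Is" by (rule Cmu_in[OF ne])
      have "\<bar>w ?C * p ?C (X \<omega>) * Dmu Is p w \<alpha> \<mu> (X \<omega>)\<bar> \<le> \<bar>w ?C\<bar> * \<bar>p ?C (X \<omega>)\<bar>"
        using D01[of \<mu> "X \<omega>"] by (auto simp: abs_mult)
      also have "\<dots> \<le> K * (\<Sum>C\<in>set Is. \<bar>p C (X \<omega>)\<bar>)"
        by (intro mult_mono wle[OF c] ple[OF c]) (auto simp: K_def intro: sum_nonneg)
      finally show "norm (w ?C * p ?C (X \<omega>) * Dmu Is p w \<alpha> \<mu> (X \<omega>))
        \<le> norm (K * (\<Sum>C\<in>set Is. \<bar>p C (X \<omega>)\<bar>))" by simp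
    qed
  qed
  have intG: "integrable M (\<lambda>\<omega>. (1 - p (Cmu Is p w \<alpha> \<mu> (X \<omega>)) (X \<omega>) - \<alpha>)
      * Dmu Is p w \<alpha> \<mu> (X \<omega>))" for \<mu>
  proof (rule Bochner_Integration.integrable_bound[of _ "\<lambda>\<omega>. (1 + \<bar>\<alpha>\<bar>) + (\<Sum>C\<in>set Is. \<bar>p C (X \<omega>)\<bar>)"])
    interpret prob_space M by fact
    show "integrable M (\<lambda>\<omega>. (1 + \<bar>\<alpha>\<bar>) + (\<Sum>C\<in>set Is. \<bar>p C (X \<omega>)\<bar>))" using boundint by auto
    show "(\<lambda>\<omega>. (1 - p (Cmu Is p w \<alpha> \<mu> (X \<omega>)) (X \<omega>) - \<alpha>)
      * Dmu Is p w \<alpha> \<mu> (X \<omega>)) \<in> borel_measurable M"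
      by (intro borel_measurable_times Dm comp[where f="\<lambda>C x. 1 - p C x - \<alpha>"] borel_measurable_diff borel_measurable_const pim)
    show "AE \<omega> in M. norm ((1 - p (Cmu Is p w \<alpha> \<mu> (X \<omega>)) (X \<omega>) - \<alpha>)
      * Dmu Is p w \<alpha> \<mu> (X \<omega>)) \<le> norm ((1 + \<bar>\<alpha>\<bar>) + (\<Sum>C\<in>set Is. \<bar>p C (X \<omega>)\<bar>))"
    proof (rule AE_I2)
      fix \<omega>
      let ?C = "Cmu Is p w \<alpha> \<mu> (X \<omega>)"
      have c: "?C \<in> set Is" by (rule Cmu_in[OF ne])
      have s: "0 \<le> (\<Sum>C\<in>set Is. \<bar>p C (X \<omega>)\<bar>)" by (auto intro: sum_nonneg)
      have "\<bar>(1 - p ?C (X \<omega>) - \<alpha>) * Dmu Is p w \<alpha> \<mu> (X \<omega>)\<bar> \<le> \<bar>1 - p ?C (X \<omega>) - \<alpha>\<bar>"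
        using D01[of \<mu> "X \<omega>"] by auto
      also have "\<dots> \<le> (1 + \<bar>\<alpha>\<bar>) + (\<Sum>C\<in>set Is. \<bar>p C (X \<omega>)\<bar>)"
        using ple[OF c, of "X \<omega>"] by linarith
      finally show "norm ((1 - p ?C (X \<omega>) - \<alpha>) * Dmu Is p w \<alpha> \<mu> (X \<omega>))
        \<le> norm ((1 + \<bar>\<alpha>\<bar>) + (\<Sum>C\<in>set Is. \<bar>p C (X \<omega>)\<bar>))" using s by simp
    qed
  qed
  have wpos: "\<And>C. C \<in> set Is \<Longrightarrow> 0 < w C" using assms(9) by auto
  have pw: "\<And>\<mu>1 \<mu>2 x. 0 \<le> \<mu>1 \<Longrightarrow> \<mu>1 \<le> \<mu>2 \<Longrightarrow>
      w (Cmu Is p w \<alpha> \<mu>2 x) * p (Cmu Is p w \<alpha> \<mu>2 x) x * Dmu Is p w \<alpha> \<mu>2 x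
          \<le> w (Cmu Is p w \<alpha> \<mu>1 x) * p (Cmu Is p w \<alpha> \<mu>1 x) x * Dmu Is p w \<alpha> \<mu>1 x
       \<and> (1 - p (Cmu Is p w \<alpha> \<mu>2 x) x - \<alpha>) * Dmu Is p w \<alpha> \<mu>2 x
          \<le> (1 - p (Cmu Is p w \<alpha> \<mu>1 x) x - \<alpha>) * Dmu Is p w \<alpha> \<mu>1 x"
    by (rule pointwise[OF ne wpos assms(5)])
  show ?thesis
    unfolding PiVal_def GVal_def
  proof (intro conjI allI impI)
    fix \<mu>1 \<mu>2 :: real assume h: "0 \<le> \<mu>1" "\<mu>1 \<le> \<mu>2"
    show "(\<integral>\<omega>. w (Cmu Is p w \<alpha> \<mu>2 (X \<omega>)) * p (Cmu Is p w \<alpha> \<mu>2 (X \<omega>)) (X \<omega>) * Dmu Is p w \<alpha> \<mu>2 (X \<omega>) \<partial>M)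
       \<le> (\<integral>\<omega>. w (Cmu Is p w \<alpha> \<mu>1 (X \<omega>)) * p (Cmu Is p w \<alpha> \<mu>1 (X \<omega>)) (X \<omega>) * Dmu Is p w \<alpha> \<mu>1 (X \<omega>) \<partial>M)"
      by (rule Bochner_Integration.integral_mono[OF intPi intPi]) (use pw[OF h] in blast)
    show "(\<integral>\<omega>. (1 - p (Cmu Is p w \<alpha> \<mu>2 (X \<omega>)) (X \<omega>) - \<alpha>) * Dmu Is p w \<alpha> \<mu>2 (X \<omega>) \<partial>M)
       \<le> (\<integral>\<omega>. (1 - p (Cmu Is p w \<alpha> \<mu>1 (X \<omega>)) (X \<omega>) - \<alpha>) * Dmu Is p w \<alpha> \<mu>1 (X \<omega>) \<partial>M)"
      by (rule Bochner_Integration.integral_mono[OF intG intG]) (use pw[OF h] in blast)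
  qed
qed

end
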